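(* Let $D$ be a pre-divergence on a Polish space $\mathcal{X}$, $c$ a cost function, and $\mu\in\mathcal{P}(\mathcal{X})$. If $P\mapsto D(P\|\mu)$ is convex, then $P\mapsto D^c(P\|\mu)$ is convex.
   Context: $\mathcal{P}(\mathcal{X})$ is the set of Borel probability measures on the Polish space $\mathcal{X}$. A pre-divergence is $D:\mathcal{P}(\mathcal{X})\times\mathcal{P}(\mathcal{X})\to[0,\infty]$ with $D(\mu\|\mu)=0$ for all $\mu$. A cost function is a lower semicontinuous $c:\mathcal{X}\times\mathcal{X}\to[0,\infty]$, with OT cost $C(\mu,\nu)=\inf\{\int c\,d\pi:\pi\in\mathcal{P}(\mathcal{X}\times\mathcal{X}),\pi_1=\mu,\pi_2=\nu\}$. $D^c(\nu\|\mu)=\inf_{\eta\in\mathcal{P}(\mathcal{X})}\{D(\eta\|\mu)+C(\eta,\nu)\}$. *)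

theory Defs
  imports "HOL-Probability.Probability"
begin

definition Prob :: "'a::topological_space measure set" where
  "Prob = {M. sets M = sets borel \<and> prob_space M}"

definition pre_divergence :: "('a::topological_space measure \<Rightarrow> 'a measure \<Rightarrow> ennreal) \<Rightarrow> bool" where
  "pre_divergence D \<longleftrightarrow> (\<forall>\<mu>\<in>Prob. D \<mu> \<mu> = 0)"

text \<open>Cost function: lower semicontinuous c : X x X -> [0,oo] (closed sublevel sets).\<close>
definition cost_function :: "('a::topological_space \<Rightarrow> 'a \<Rightarrow> ennreal) \<Rightarrow> bool" where
  "cost_function c \<longleftrightarrow> (\<forall>y. closed {p :: 'a \<times> 'a. c (fst p) (snd p) \<le> y})"

definition couplings :: "'a::topological_space measure \<Rightarrow> 'a measure \<Rightarrow> ('a \<times> 'a) measure set" where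
  "couplings \<mu> \<nu> = {\<pi>. sets \<pi> = sets borel \<and> prob_space \<pi> \<and>
      distr \<pi> borel fst = \<mu> \<and> distr \<pi> borel snd = \<nu>}"

definition OT_cost :: "('a::topological_space \<Rightarrow> 'a \<Rightarrow> ennreal) \<Rightarrow> 'a measure \<Rightarrow> 'a measure \<Rightarrow> ennreal" where
  "OT_cost c \<mu> \<nu> = (INF \<pi>\<in>couplings \<mu> \<nu>. \<integral>\<^sup>+ p. c (fst p) (snd p) \<partial>\<pi>)"

definition Dc :: "('a::topological_space measure \<Rightarrow> 'a measure \<Rightarrow> ennreal) \<Rightarrow> ('a \<Rightarrow> 'a \<Rightarrow> ennreal)
    \<Rightarrow> 'a measure \<Rightarrow> 'a measure \<Rightarrow> ennreal" where
  "Dc D c \<nu> \<mu> = (INF \<eta>\<in>Prob. D \<eta> \<mu> + OT_cost c \<eta> \<nu>)"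

definition mix :: "real \<Rightarrow> 'a::topological_space measure \<Rightarrow> 'a measure \<Rightarrow> 'a measure" where
  "mix t P Q = measure_of (space borel) (sets borel)
      (\<lambda>A. ennreal t * emeasure P A + ennreal (1 - t) * emeasure Q A)"

definition convex_on_Prob :: "('a::topological_space measure \<Rightarrow> ennreal) \<Rightarrow> bool" where
  "convex_on_Prob F \<longleftrightarrow> (\<forall>P\<in>Prob. \<forall>Q\<in>Prob. \<forall>t\<in>{0..1::real}.
      F (mix t P Q) \<le> ennreal t * F P + ennreal (1 - t) * F Q)"

end

theory Submission
  imports Defs
begin

lemma INF_cadd_ennreal:
  fixes f :: "'i \<Rightarrow> ennreal"
  assumes "I \<noteq> {}"
  shows "c + (INF i\<in>I. f i) = (INF i\<in>I. c + f i)"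
proof -
  have m: "mono (\<lambda>x::ennreal. c + x)" by (auto simp: mono_def add_left_mono)
  have "continuous (at_right (Inf (f ` I))) (\<lambda>x::ennreal. c + x)"
    by (intro continuous_add continuous_const continuous_ident)
  thus ?thesis
    using continuous_at_Inf_mono[OF m, of "f ` I"] assms
    by (auto simp: image_comp intro: bdd_belowI[of _ 0])
qed

lemma INF_cmult_ennreal:
  fixes f :: "'i \<Rightarrow> ennreal"
  assumes "I \<noteq> {}" "c < top"
  shows "c * (INF i\<in>I. f i) = (INF i\<in>I. c * f i)"
proof -
  have "continuous_on UNIV (\<lambda>x::ennreal. c * x)"
    using ennreal_continuous_on_cmult[OF assms(2) continuous_on_id] by simp
  have m: "mono (\<lambda>x::ennreal. c * x)" by (auto simp: mono_def mult_left_mono)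
  have "continuous (at_right (Inf (f ` I))) (\<lambda>x::ennreal. c * x)"
    using \<open>continuous_on UNIV _\<close>
    using continuous_on_eq_continuous_within by (metis UNIV_I continuous_within_subset subset_UNIV)
  thus ?thesis
    using continuous_at_Inf_mono[OF m, of "f ` I"] assms
    by (auto simp: image_comp intro: bdd_belowI[of _ 0])
qed

lemma le_add_INF:
  fixes f :: "'i \<Rightarrow> ennreal"
  assumes "\<And>i. i \<in> I \<Longrightarrow> x \<le> y + f i"
  shows "x \<le> y + (INF i\<in>I. f i)"
proof (cases "I = {}")
  case True then show ?thesis by simp
next
  case False
  then show ?thesis unfolding INF_cadd_ennreal[OF False] by (auto intro: INF_greatest assms)
qed

lemma le_cmult_INF:
  fixes f :: "'i \<Rightarrow> ennreal"
  assumes "\<And>i. i \<in> I \<Longrightarrow> x \<le> y + c * f i" "0 < c" "c < top"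
  shows "x \<le> y + c * (INF i\<in>I. f i)"
proof (cases "I = {}")
  case True then show ?thesis using assms(2) by (auto simp: ennreal_mult_top)
next
  case False
  show ?thesis unfolding INF_cmult_ennreal[OF False assms(3)]
    by (rule le_add_INF) (rule assms(1))
qed

lemma c_meas:
  fixes c :: "'a::topological_space \<Rightarrow> 'a \<Rightarrow> ennreal"
  assumes "cost_function c"
  shows "(\<lambda>p. c (fst p) (snd p)) \<in> borel_measurable borel"
  by (rule borel_measurableI_le) (use assms in \<open>auto simp: cost_function_def\<close>)

lemma sets_mix[simp]: "sets (mix t P Q) = sets (borel::'b::topological_space measure)"
  unfolding mix_def
  using sets_measure_of[OF sets.space_closed[of borel]] sets.sigma_sets_eq[of borel] by simp

lemma meas_cong_borel:
  assumes "sets M = sets borel" "f \<in> borel_measurable borel"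
  shows "f \<in> borel_measurable M"
  by (subst measurable_cong_sets[OF assms(1) refl]) (rule assms(2))

lemma space_mix[simp]: "space (mix t P Q) = (UNIV::'b::topological_space set)"
  using sets_eq_imp_space_eq[OF sets_mix[of t P Q]] by simp

lemma emeasure_mix:
  fixes P Q :: "'b::topological_space measure"
  assumes P: "sets P = sets borel" and Q: "sets Q = sets borel" and A: "A \<in> sets borel"
  shows "emeasure (mix t P Q) A = ennreal t * emeasure P A + ennreal (1 - t) * emeasure Q A"
  unfolding mix_def
proof (rule emeasure_measure_of_sigma[OF sets.sigma_algebra_axioms _ _ A])
  show "positive (sets borel) (\<lambda>A. ennreal t * emeasure P A + ennreal (1 - t) * emeasure Q A)"
    by (simp add: positive_def)
  show "countably_additive (sets borel) (\<lambda>A. ennreal t * emeasure P A + ennreal (1 - t) * emeasure Q A)"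
    unfolding countably_additive_def
  proof (intro allI impI)
    fix B :: "nat \<Rightarrow> 'b set"
    assume B: "range B \<subseteq> sets borel" "disjoint_family B" "\<Union> (range B) \<in> sets borel"
    have "(\<Sum>i. ennreal t * emeasure P (B i) + ennreal (1 - t) * emeasure Q (B i))
        = (\<Sum>i. ennreal t * emeasure P (B i)) + (\<Sum>i. ennreal (1 - t) * emeasure Q (B i))"
      by (rule suminf_add[symmetric]) auto
    also have "\<dots> = ennreal t * (\<Sum>i. emeasure P (B i)) + ennreal (1 - t) * (\<Sum>i. emeasure Q (B i))"
      by (simp add: ennreal_suminf_cmult)
    also have "\<dots> = ennreal t * emeasure P (\<Union> (range B)) + ennreal (1 - t) * emeasure Q (\<Union> (range B))"
      using B P Q by (simp add: suminf_emeasure)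
    finally show "(\<Sum>i. ennreal t * emeasure P (B i) + ennreal (1 - t) * emeasure Q (B i))
        = ennreal t * emeasure P (\<Union> (range B)) + ennreal (1 - t) * emeasure Q (\<Union> (range B))" .
  qed
qed

lemma prob_space_mix:
  fixes P Q :: "'b::topological_space measure"
  assumes P: "sets P = sets borel" "prob_space P" and Q: "sets Q = sets borel" "prob_space Q"
    and t: "0 \<le> t" "t \<le> 1"
  shows "prob_space (mix t P Q)"
proof (rule prob_spaceI)
  have sP: "space P = UNIV" using sets_eq_imp_space_eq[OF P(1)] by simp
  have sQ: "space Q = UNIV" using sets_eq_imp_space_eq[OF Q(1)] by simp
  have "emeasure (mix t P Q) UNIV = ennreal t * emeasure P (space P) + ennreal (1 - t) * emeasure Q (space Q)"
    using emeasure_mix[OF P(1) Q(1), of UNIV t] sP sQ by simp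
  also have "\<dots> = ennreal t + ennreal (1 - t)"
    using prob_space.emeasure_space_1[OF P(2)] prob_space.emeasure_space_1[OF Q(2)] by simp
  also have "\<dots> = 1" using t by (simp flip: ennreal_plus)
  finally show "emeasure (mix t P Q) (space (mix t P Q)) = 1" by simp
qed

lemma Prob_mix:
  assumes "P \<in> Prob" "Q \<in> Prob" "0 \<le> t" "t \<le> 1"
  shows "mix t P Q \<in> Prob"
  using assms prob_space_mix[of P Q t] by (auto simp: Prob_def)

lemma nn_integral_mix:
  fixes P Q :: "'b::topological_space measure"
  assumes P: "sets P = sets borel" and Q: "sets Q = sets borel"
    and f: "f \<in> borel_measurable borel"
  shows "(\<integral>\<^sup>+x. f x \<partial>mix t P Q) = ennreal t * (\<integral>\<^sup>+x. f x \<partial>P) + ennreal (1 - t) * (\<integral>\<^sup>+x. f x \<partial>Q)"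
  using f
proof (induction rule: borel_measurable_induct)
  case (cong f g)
  have sP: "space P = UNIV" using sets_eq_imp_space_eq[OF P] by simp
  have sQ: "space Q = UNIV" using sets_eq_imp_space_eq[OF Q] by simp
  have "f = g" using cong(3) by auto
  then show ?case using cong by simp
next
  case (set A)
  then show ?case using P Q by (simp add: emeasure_mix)
next
  case (mult u c)
  have mP: "u \<in> borel_measurable P" using mult(2) P by (rule_tac meas_cong_borel)
  have mQ: "u \<in> borel_measurable Q" using mult(2) Q by (rule_tac meas_cong_borel)
  have mM: "u \<in> borel_measurable (mix t P Q)" by (rule meas_cong_borel[OF sets_mix mult(2)])
  show ?case using mult(4) by (simp add: nn_integral_cmult mP mQ mM distrib_left ac_simps)
next
  case (add u v)
  have mP: "u \<in> borel_measurable P" "v \<in> borel_measurable P" using add P by (auto intro: meas_cong_borel)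
  have mQ: "u \<in> borel_measurable Q" "v \<in> borel_measurable Q" using add Q by (auto intro: meas_cong_borel)
  have mM: "u \<in> borel_measurable (mix t P Q)" "v \<in> borel_measurable (mix t P Q)"
    using add by (auto intro: meas_cong_borel[OF sets_mix])
  show ?case using add by (simp add: nn_integral_add mP mQ mM distrib_left ac_simps)
next
  case (seq U)
  have mP: "U i \<in> borel_measurable P" for i using seq P by (auto intro: meas_cong_borel)
  have mQ: "U i \<in> borel_measurable Q" for i using seq Q by (auto intro: meas_cong_borel)
  have mM: "U i \<in> borel_measurable (mix t P Q)" for i
    using seq by (auto intro: meas_cong_borel[OF sets_mix])
  have iP: "incseq (\<lambda>i. ennreal t * (\<integral>\<^sup>+x. U i x \<partial>P))"
    using \<open>incseq U\<close> by (auto simp: incseq_def le_fun_def intro!: mult_left_mono nn_integral_mono)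
  have iQ: "incseq (\<lambda>i. ennreal (1 - t) * (\<integral>\<^sup>+x. U i x \<partial>Q))"
    using \<open>incseq U\<close> by (auto simp: incseq_def le_fun_def intro!: mult_left_mono nn_integral_mono)
  have "(\<integral>\<^sup>+x. (SUP i. U i) x \<partial>mix t P Q) = (SUP i. \<integral>\<^sup>+x. U i x \<partial>mix t P Q)"
    by (rule nn_integral_monotone_convergence_SUP[OF \<open>incseq U\<close> mM, simplified SUP_apply[symmetric]])
  also have "\<dots> = (SUP i. ennreal t * (\<integral>\<^sup>+x. U i x \<partial>P) + ennreal (1 - t) * (\<integral>\<^sup>+x. U i x \<partial>Q))"
    using seq by simp
  also have "\<dots> = (SUP i. ennreal t * (\<integral>\<^sup>+x. U i x \<partial>P)) + (SUP i. ennreal (1 - t) * (\<integral>\<^sup>+x. U i x \<partial>Q))"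
    by (rule ennreal_SUP_add[OF iP iQ])
  also have "\<dots> = ennreal t * (SUP i. (\<integral>\<^sup>+x. U i x \<partial>P)) + ennreal (1 - t) * (SUP i. (\<integral>\<^sup>+x. U i x \<partial>Q))"
    by (simp add: SUP_mult_left_ennreal)
  also have "\<dots> = ennreal t * (\<integral>\<^sup>+x. (SUP i. U i) x \<partial>P) + ennreal (1 - t) * (\<integral>\<^sup>+x. (SUP i. U i) x \<partial>Q)"
    using nn_integral_monotone_convergence_SUP[OF \<open>incseq U\<close> mP] nn_integral_monotone_convergence_SUP[OF \<open>incseq U\<close> mQ]
    by (simp add: SUP_apply image_comp)
  finally show ?case .
qed

lemma distr_mix:
  fixes P Q :: "'b::topological_space measure" and g :: "'b \<Rightarrow> 'c::topological_space"
  assumes P: "sets P = sets borel" and Q: "sets Q = sets borel" and g: "g \<in> borel_measurable borel"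
  shows "distr (mix t P Q) borel g = mix t (distr P borel g) (distr Q borel g)"
proof (rule measure_eqI)
  show "sets (distr (mix t P Q) borel g) = sets (mix t (distr P borel g) (distr Q borel g))" by simp
next
  fix A assume "A \<in> sets (distr (mix t P Q) borel g)"
  hence A: "A \<in> sets borel" by simp
  have gA: "g -` A \<in> sets borel" using measurable_sets[OF g A] by simp
  have sP: "space P = UNIV" using sets_eq_imp_space_eq[OF P] by simp
  have sQ: "space Q = UNIV" using sets_eq_imp_space_eq[OF Q] by simp
  have gM: "g \<in> measurable (mix t P Q) borel" by (rule meas_cong_borel[OF sets_mix g])
  have gP: "g \<in> measurable P borel" by (rule meas_cong_borel[OF P g])
  have gQ: "g \<in> measurable Q borel" by (rule meas_cong_borel[OF Q g])
  show "emeasure (distr (mix t P Q) borel g) A = emeasure (mix t (distr P borel g) (distr Q borel g)) A"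
    using A gA sP sQ P Q
    by (simp add: emeasure_distr[OF gM A] emeasure_distr[OF gP A] emeasure_distr[OF gQ A] emeasure_mix)
qed

lemma couplings_mix:
  assumes "\<pi>1 \<in> couplings \<eta>1 P" "\<pi>2 \<in> couplings \<eta>2 Q" "0 \<le> t" "t \<le> 1"
  shows "mix t \<pi>1 \<pi>2 \<in> couplings (mix t \<eta>1 \<eta>2) (mix t P Q)"
proof -
  have f: "fst \<in> borel_measurable (borel :: ('a \<times> 'a) measure)"
    by (intro borel_measurable_continuous_onI continuous_on_fst continuous_on_id)
  have s: "snd \<in> borel_measurable (borel :: ('a \<times> 'a) measure)"
    by (intro borel_measurable_continuous_onI continuous_on_snd continuous_on_id)
  show ?thesis
    using assms prob_space_mix[of \<pi>1 \<pi>2 t] distr_mix[OF _ _ f, of \<pi>1 \<pi>2 t] distr_mix[OF _ _ s, of \<pi>1 \<pi>2 t]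
    by (auto simp: couplings_def)
qed

lemma mix_0:
  assumes "Q \<in> Prob" shows "mix 0 P Q = Q"
proof -
  have "sets Q = sets borel" using assms by (simp add: Prob_def)
  moreover have "space Q = space borel" using sets_eq_imp_space_eq[OF calculation] .
  ultimately have "mix 0 P Q = measure_of (space Q) (sets Q) (emeasure Q)"
    unfolding mix_def by simp
  also have "\<dots> = Q" by (rule measure_of_of_measure)
  finally show ?thesis .
qed

lemma mix_1:
  assumes "P \<in> Prob" shows "mix 1 P Q = P"
proof -
  have "sets P = sets borel" using assms by (simp add: Prob_def)
  moreover have "space P = space borel" using sets_eq_imp_space_eq[OF calculation] .
  ultimately have "mix 1 P Q = measure_of (space P) (sets P) (emeasure P)"
    unfolding mix_def by simp
  also have "\<dots> = P" by (rule measure_of_of_measure)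
  finally show ?thesis .
qed

theorem lemma1:
  fixes D :: "'a::polish_space measure \<Rightarrow> 'a measure \<Rightarrow> ennreal"
    and c :: "'a \<Rightarrow> 'a \<Rightarrow> ennreal"
    and \<mu> :: "'a measure"
  assumes "pre_divergence D"
    and "cost_function c"
    and "\<mu> \<in> Prob"
    and "convex_on_Prob (\<lambda>P. D P \<mu>)"
  shows "convex_on_Prob (\<lambda>P. Dc D c P \<mu>)"
  unfolding convex_on_Prob_def
proof (intro ballI)
  fix P Q :: "'a measure" and t :: real
  assume P: "P \<in> Prob" and Q: "Q \<in> Prob" and t: "t \<in> {0..1}"
  define C where "C = (\<lambda>p::'a\<times>'a. c (fst p) (snd p))"
  have Cm: "C \<in> borel_measurable borel" unfolding C_def by (rule c_meas[OF assms(2)])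
  show "Dc D c (mix t P Q) \<mu> \<le> ennreal t * Dc D c P \<mu> + ennreal (1 - t) * Dc D c Q \<mu>"
  proof (cases "t = 0 \<or> t = 1")
    case True
    then show ?thesis using P Q mix_0[OF Q] mix_1[OF P] by auto
  next
    case False
    with t have t0: "0 < t" "t < 1" by auto
    have key: "Dc D c (mix t P Q) \<mu> \<le> ennreal (1 - t) * (D \<eta>2 \<mu>) + ennreal (1 - t) * (\<integral>\<^sup>+p. C p \<partial>\<pi>2)
        + (ennreal t * D \<eta>1 \<mu> + ennreal t * (\<integral>\<^sup>+p. C p \<partial>\<pi>1))"
      if e1: "\<eta>1 \<in> Prob" and p1: "\<pi>1 \<in> couplings \<eta>1 P" and e2: "\<eta>2 \<in> Prob" and p2: "\<pi>2 \<in> couplings \<eta>2 Q"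
      for \<eta>1 \<eta>2 :: "'a measure" and \<pi>1 \<pi>2 :: "('a \<times> 'a) measure"
    proof -
      have eM: "mix t \<eta>1 \<eta>2 \<in> Prob" using Prob_mix e1 e2 t by auto
      have pM: "mix t \<pi>1 \<pi>2 \<in> couplings (mix t \<eta>1 \<eta>2) (mix t P Q)"
        using couplings_mix[OF p1 p2] t by auto
      have s1: "sets \<pi>1 = sets borel" "sets \<pi>2 = sets borel" using p1 p2 by (auto simp: couplings_def)
      have "Dc D c (mix t P Q) \<mu> \<le> D (mix t \<eta>1 \<eta>2) \<mu> + OT_cost c (mix t \<eta>1 \<eta>2) (mix t P Q)"
        unfolding Dc_def by (rule INF_lower[OF eM])
      also have "OT_cost c (mix t \<eta>1 \<eta>2) (mix t P Q) \<le> (\<integral>\<^sup>+p. C p \<partial>mix t \<pi>1 \<pi>2)"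
        unfolding OT_cost_def C_def by (rule INF_lower[OF pM])
      also have "(\<integral>\<^sup>+p. C p \<partial>mix t \<pi>1 \<pi>2) = ennreal t * (\<integral>\<^sup>+p. C p \<partial>\<pi>1) + ennreal (1 - t) * (\<integral>\<^sup>+p. C p \<partial>\<pi>2)"
        by (rule nn_integral_mix[OF s1 Cm])
      also have "D (mix t \<eta>1 \<eta>2) \<mu> \<le> ennreal t * D \<eta>1 \<mu> + ennreal (1 - t) * D \<eta>2 \<mu>"
        using assms(4) e1 e2 t unfolding convex_on_Prob_def by blast
      finally show ?thesis by (simp add: add_mono ac_simps)
    qed
    have tt: "0 < ennreal t" "ennreal t < top" "0 < ennreal (1 - t)" "ennreal (1 - t) < top"
      using t0 by auto
    have "Dc D c (mix t P Q) \<mu> \<le> ennreal (1 - t) * Dc D c Q \<mu> + ennreal t * Dc D c P \<mu>"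
      unfolding Dc_def[of D c P] OT_cost_def
    proof (rule le_cmult_INF[OF _ tt(1,2)])
      fix \<eta>1 :: "'a measure" assume e1: "\<eta>1 \<in> Prob"
      show "Dc D c (mix t P Q) \<mu> \<le> ennreal (1 - t) * Dc D c Q \<mu> +
          ennreal t * (D \<eta>1 \<mu> + (INF \<pi>\<in>couplings \<eta>1 P. \<integral>\<^sup>+ p. c (fst p) (snd p) \<partial>\<pi>))"
        unfolding distrib_left add.assoc[symmetric]
      proof (rule le_cmult_INF[OF _ tt(1,2)])
        fix \<pi>1 :: "('a \<times> 'a) measure" assume p1: "\<pi>1 \<in> couplings \<eta>1 P"
        have "Dc D c (mix t P Q) \<mu> \<le> (ennreal t * D \<eta>1 \<mu> + ennreal t * (\<integral>\<^sup>+p. C p \<partial>\<pi>1)) + ennreal (1 - t) * Dc D c Q \<mu>"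
          unfolding Dc_def[of D c Q] OT_cost_def
        proof (rule le_cmult_INF[OF _ tt(3,4)])
          fix \<eta>2 :: "'a measure" assume e2: "\<eta>2 \<in> Prob"
          show "Dc D c (mix t P Q) \<mu> \<le> (ennreal t * D \<eta>1 \<mu> + ennreal t * (\<integral>\<^sup>+p. C p \<partial>\<pi>1)) +
              ennreal (1 - t) * (D \<eta>2 \<mu> + (INF \<pi>\<in>couplings \<eta>2 Q. \<integral>\<^sup>+ p. c (fst p) (snd p) \<partial>\<pi>))"
            unfolding distrib_left add.assoc[symmetric]
          proof (rule le_cmult_INF[OF _ tt(3,4)])
            fix \<pi>2 :: "('a \<times> 'a) measure" assume p2: "\<pi>2 \<in> couplings \<eta>2 Q"
            show "Dc D c (mix t P Q) \<mu> \<le> ennreal t * D \<eta>1 \<mu> + ennreal t * (\<integral>\<^sup>+p. C p \<partial>\<pi>1) +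
                ennreal (1 - t) * D \<eta>2 \<mu> + ennreal (1 - t) * (\<integral>\<^sup>+ p. c (fst p) (snd p) \<partial>\<pi>2)"
              using key[OF e1 p1 e2 p2] unfolding C_def by (simp add: ac_simps)
          qed
        qed
        then show "Dc D c (mix t P Q) \<mu> \<le> ennreal (1 - t) * Dc D c Q \<mu> + ennreal t * D \<eta>1 \<mu> +
            ennreal t * (\<integral>\<^sup>+ p. c (fst p) (snd p) \<partial>\<pi>1)"
          unfolding C_def by (simp add: ac_simps)
      qed
    qed
    then show ?thesis by (simp add: ac_simps)
  qed
qed

end
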